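(* There is no SLCS formula $\varphi$ such that for every quasi-discrete neighbourhood model $\mathcal M$ with underlying space $(X,\mathcal N)$: $(X,\mathcal N)$ is $T_0$-separated if and only if $\mathcal M,x\models\varphi$ for every $x\in X$. (In particular, there exist a $T_0$-separated and a non-$T_0$-separated quasi-discrete model with a path preserving bisimulation between them relating every point of each model to some point of the other.)
   Context: A neighbourhood space $(X,\mathcal N)$ assigns to each $x\in X$ a filter $\mathcal N(x)$ on $X$ (closed under finite intersections and supersets, not containing $\emptyset$) such that $x\in N$ for all $N\in\mathcal N(x)$. Closure: $\mathcal C(A)=\{x\mid\forall N\in\mathcal N(x): A\cap N\neq\emptyset\}$. Continuity: $f$ continuous iff $f^{-1}[N]\in\mathcal N_1(x)$ for all $N\in\mathcal N_2(f(x))$. The space is quasi-discrete if each $x$ has a minimal neighbourhood $N_{\min}(x)\in\mathcal N(x)$ contained in every element of $\mathcal N(x)$. A quasi-discrete neighbourhood model is $\mathcal M=((X,\mathcal N),\mathbb N,V)$ with $(X,\mathcal N)$ quasi-discrete, index space the natural numbers with order $\le$, least element $0$ and the quasi-discrete neighbourhood system with $N_{\min}(n)=\{n,n+1\}$, and valuation $V:X\to\mathcal P(\mathsf P)$ for a fixed countable set $\mathsf P$ of atoms. A path is a continuous map $p:\mathbb N\to X$. The space is $T_0$-separated if for all $x,y\in X$, $y\in\mathcal C(\{x\})$ and $x\in\mathcal C(\{y\})$ imply $x=y$. SLCS formulas: $\varphi::=a\mid\top\mid\neg\varphi\mid\varphi\wedge\varphi\mid\mathcal N\varphi\mid\varphi\,\mathcal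 R\,\varphi\mid\varphi\,\mathcal P\,\varphi$ with $a\in\mathsf P$. Semantics: $\mathcal M,x\models a$ iff $a\in V(x)$; Booleans as usual; $\mathcal M,x\models\mathcal N\varphi$ iff $x\in\mathcal C(\{y\mid\mathcal M,y\models\varphi\})$; $\mathcal M,x\models\varphi\,\mathcal R\,\psi$ iff there are a path $p$ and $n$ with $p(n)=x$, $\mathcal M,p(0)\models\psi$ and $\mathcal M,p(i)\models\varphi$ for all $0<i\le n$; $\mathcal M,x\models\varphi\,\mathcal P\,\psi$ iff there are a path $p$ with $p(0)=x$ and $n$ with $\mathcal M,p(n)\models\psi$ and $\mathcal M,p(i)\models\varphi$ for all $0\le i<n$. Path preserving bisimulation: for models $\mathcal M_1,\mathcal M_2$ over the same index space with path sets $\mathcal P_1,\mathcal P_2$, a triple $(Z_{\mathcal N},Z_1,Z_2)$, $\emptyset\ne Z_{\mathcal N}\subseteq X_1\times X_2$, $Z_1\subseteq(\mathcal P_1\times I)\times(\mathcal P_2\times I)$, $Z_2\subseteq(\mathcal P_2\times I)\times(\mathcal P_1\times I)$, such that: (1) at each pair $x_1Z_{\mathcal N}x_2$: $V_1(x_1)=V_2(x_2)$; for every $N_2\in\mathcal N_2(x_2)$ there is $N_1\in\mathcal N_1(x_1)$ with every $y_1\in N_1$ related to some $y_2\in N_2$; and symmetrically for every $N_1\in\mathcal N_1(x_1)$; (2) if $x_1Z_{\mathcal N}x_2$, $p(0)=x_1$, $n\ne0$, there are $q$ with $q(0)=x_2$ and $m$ with $p(n)Z_{\mathcal N}q(m)$,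 $(p,n)Z_1(q,m)$; (3) if $x_1Z_{\mathcal N}x_2$, $p(n)=x_1$, $n\ne0$, there are $q,m$ with $q(m)=x_2$, $p(0)Z_{\mathcal N}q(0)$, $(p,n)Z_1(q,m)$; (4) if $(p,n)Z_1(q,m)$ and $0<k_q<m$, there is $0<k_p<n$ with $p(k_p)Z_{\mathcal N}q(k_q)$; (5)–(7) the symmetric conditions with roles of the models swapped and $Z_2$ in place of $Z_1$ (i.e. (5) if $x_1Z_{\mathcal N}x_2$, $q(0)=x_2$, $m\ne0$, there are $p$ with $p(0)=x_1$ and $n$ with $p(n)Z_{\mathcal N}q(m)$, $(q,m)Z_2(p,n)$; (6) if $x_1Z_{\mathcal N}x_2$, $q(m)=x_2$, $m\neq0$, there are $p,n$ with $p(n)=x_1$, $p(0)Z_{\mathcal N}q(0)$, $(q,m)Z_2(p,n)$; (7) if $(q,m)Z_2(p,n)$ and $0<k_p<n$, there is $0<k_q<m$ with $p(k_p)Z_{\mathcal N}q(k_q)$). *)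

theory Defs
  imports Main
begin

definition is_filter_on :: "'a set \<Rightarrow> 'a set set \<Rightarrow> bool" where
  "is_filter_on X F \<longleftrightarrow> F \<subseteq> Pow X \<and> X \<in> F \<and> {} \<notin> F
     \<and> (\<forall>A\<in>F. \<forall>B\<in>F. A \<inter> B \<in> F)
     \<and> (\<forall>A\<in>F. \<forall>B. A \<subseteq> B \<and> B \<subseteq> X \<longrightarrow> B \<in> F)"

definition nbhd_space :: "'a set \<Rightarrow> ('a \<Rightarrow> 'a set set) \<Rightarrow> bool" where
  "nbhd_space X N \<longleftrightarrow> (\<forall>x\<in>X. is_filter_on X (N x) \<and> (\<forall>S\<in>N x. x \<in> S))"

definition quasi_discrete :: "'a set \<Rightarrow> ('a \<Rightarrow> 'a set set) \<Rightarrow> bool" where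
  "quasi_discrete X N \<longleftrightarrow> nbhd_space X N \<and>
     (\<forall>x\<in>X. \<exists>M\<in>N x. \<forall>S\<in>N x. M \<subseteq> S)"

definition nclosure :: "'a set \<Rightarrow> ('a \<Rightarrow> 'a set set) \<Rightarrow> 'a set \<Rightarrow> 'a set" where
  "nclosure X N A = {x\<in>X. \<forall>S\<in>N x. A \<inter> S \<noteq> {}}"

text \<open>Index space: naturals with minimal neighbourhood {n, n+1}.\<close>
definition nat_nbhd :: "nat \<Rightarrow> nat set set" where
  "nat_nbhd n = {S. {n, Suc n} \<subseteq> S}"

definition is_path :: "'a set \<Rightarrow> ('a \<Rightarrow> 'a set set) \<Rightarrow> (nat \<Rightarrow> 'a) \<Rightarrow> bool" where
  "is_path X N p \<longleftrightarrow> (\<forall>n. p n \<in> X) \<and>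
     (\<forall>n. \<forall>S\<in>N (p n). {m. p m \<in> S} \<in> nat_nbhd n)"

definition T0_sep :: "'a set \<Rightarrow> ('a \<Rightarrow> 'a set set) \<Rightarrow> bool" where
  "T0_sep X N \<longleftrightarrow> (\<forall>x\<in>X. \<forall>y\<in>X.
     y \<in> nclosure X N {x} \<and> x \<in> nclosure X N {y} \<longrightarrow> x = y)"

datatype slcs = Atom nat | Top | Neg slcs | Conj slcs slcs | Near slcs
  | Reach slcs slcs | Pass slcs slcs

primrec sat :: "'a set \<Rightarrow> ('a \<Rightarrow> 'a set set) \<Rightarrow> ('a \<Rightarrow> nat set) \<Rightarrow> slcs \<Rightarrow> 'a \<Rightarrow> bool" where
  "sat X N V (Atom a) x \<longleftrightarrow> a \<in> V x"
| "sat X N V Top x \<longleftrightarrow> True"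
| "sat X N V (Neg \<phi>) x \<longleftrightarrow> \<not> sat X N V \<phi> x"
| "sat X N V (Conj \<phi> \<psi>) x \<longleftrightarrow> sat X N V \<phi> x \<and> sat X N V \<psi> x"
| "sat X N V (Near \<phi>) x \<longleftrightarrow> x \<in> nclosure X N {y\<in>X. sat X N V \<phi> y}"
| "sat X N V (Reach \<phi> \<psi>) x \<longleftrightarrow> (\<exists>p n. is_path X N p \<and> p n = x \<and> sat X N V \<psi> (p 0)
      \<and> (\<forall>i. 0 < i \<and> i \<le> n \<longrightarrow> sat X N V \<phi> (p i)))"
| "sat X N V (Pass \<phi> \<psi>) x \<longleftrightarrow> (\<exists>p n. is_path X N p \<and> p 0 = x \<and> sat X N V \<psi> (p n)
      \<and> (\<forall>i<n. sat X N V \<phi> (p i)))"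

end

theory Submission
  imports Defs
begin

primrec fv :: "slcs \<Rightarrow> bool" where
  "fv (Atom a) = False"
| "fv Top = True"
| "fv (Neg \<phi>) = (\<not> fv \<phi>)"
| "fv (Conj \<phi> \<psi>) = (fv \<phi> \<and> fv \<psi>)"
| "fv (Near \<phi>) = fv \<phi>"
| "fv (Reach \<phi> \<psi>) = fv \<psi>"
| "fv (Pass \<phi> \<psi>) = fv \<psi>"

lemma path_indisc:
  assumes "\<forall>x\<in>X. N x = {X}"
  shows "is_path X N p \<longleftrightarrow> (\<forall>n. p n \<in> X)"
  using assms unfolding is_path_def nat_nbhd_def by auto

lemma sat_indisc:
  assumes ne: "X \<noteq> {}" and NX: "\<forall>x\<in>X. N x = {X}" and x: "x \<in> X"
  shows "sat X N (\<lambda>_. {}) \<phi> x = fv \<phi>"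
  using x
proof (induction \<phi> arbitrary: x)
  case (Near \<phi>)
  have S: "{y\<in>X. sat X N (\<lambda>_. {}) \<phi> y} = (if fv \<phi> then X else {})"
    using Near.IH by auto
  show ?case using Near.prems NX ne by (auto simp: nclosure_def S)
next
  case (Reach \<phi> \<psi>)
  show ?case
  proof
    assume "sat X N (\<lambda>_. {}) (Reach \<phi> \<psi>) x"
    then obtain p n where "is_path X N p" "sat X N (\<lambda>_. {}) \<psi> (p 0)" by auto
    then show "fv (Reach \<phi> \<psi>)" using Reach.IH path_indisc[OF NX] by auto
  next
    assume "fv (Reach \<phi> \<psi>)"
    then have "sat X N (\<lambda>_. {}) \<psi> x" using Reach.IH Reach.prems by auto
    moreover have "is_path X N (\<lambda>_. x)" using path_indisc[OF NX] Reach.prems by auto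
    ultimately show "sat X N (\<lambda>_. {}) (Reach \<phi> \<psi>) x"
      by (simp only: sat.simps) (rule exI[of _ "\<lambda>_. x"], rule exI[of _ 0], auto)
  qed
next
  case (Pass \<phi> \<psi>)
  show ?case
  proof
    assume "sat X N (\<lambda>_. {}) (Pass \<phi> \<psi>) x"
    then obtain p n where "is_path X N p" "sat X N (\<lambda>_. {}) \<psi> (p n)" by auto
    then show "fv (Pass \<phi> \<psi>)" using Pass.IH path_indisc[OF NX] by auto
  next
    assume "fv (Pass \<phi> \<psi>)"
    then have "sat X N (\<lambda>_. {}) \<psi> x" using Pass.IH Pass.prems by auto
    moreover have "is_path X N (\<lambda>_. x)" using path_indisc[OF NX] Pass.prems by auto
    ultimately show "sat X N (\<lambda>_. {}) (Pass \<phi> \<psi>) x"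
      by (simp only: sat.simps) (rule exI[of _ "\<lambda>_. x"], rule exI[of _ 0], auto)
  qed
qed auto

lemma qd_indisc:
  assumes "X \<noteq> {}"
  shows "quasi_discrete X (\<lambda>_. {X})"
  using assms unfolding quasi_discrete_def nbhd_space_def is_filter_on_def by auto

theorem proposition19:
  assumes "infinite (UNIV :: 'a set)"
  shows "\<not> (\<exists>\<phi>. \<forall>(X :: 'a set) N (V :: 'a \<Rightarrow> nat set).
            quasi_discrete X N \<longrightarrow> (T0_sep X N \<longleftrightarrow> (\<forall>x\<in>X. sat X N V \<phi> x)))"
proof
  assume "\<exists>\<phi>. \<forall>(X :: 'a set) N (V :: 'a \<Rightarrow> nat set).
            quasi_discrete X N \<longrightarrow> (T0_sep X N \<longleftrightarrow> (\<forall>x\<in>X. sat X N V \<phi> x))"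
  then obtain \<phi> where H: "\<And>(X :: 'a set) N (V :: 'a \<Rightarrow> nat set).
            quasi_discrete X N \<Longrightarrow> (T0_sep X N \<longleftrightarrow> (\<forall>x\<in>X. sat X N V \<phi> x))" by blast
  obtain a :: 'a where True by simp
  obtain b :: 'a where ab: "b \<noteq> a"
    using assms by (metis UNIV_eq_I finite.emptyI finite_insert singletonI insertE)
  have 1: "T0_sep {a} (\<lambda>_. {{a}})" unfolding T0_sep_def by auto
  have "\<forall>x\<in>{a}. sat {a} (\<lambda>_. {{a}}) (\<lambda>_. {}) \<phi> x"
    using H[OF qd_indisc, of "{a}"] 1 by auto
  hence f: "fv \<phi>" using sat_indisc[of "{a}" "\<lambda>_. {{a}}" a] by auto
  have 2: "\<not> T0_sep {a,b} (\<lambda>_. {{a,b}})" unfolding T0_sep_def nclosure_def using ab by auto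
  have "\<forall>x\<in>{a,b}. sat {a,b} (\<lambda>_. {{a,b}}) (\<lambda>_. {}) \<phi> x"
    using sat_indisc[of "{a,b}" "\<lambda>_. {{a,b}}"] f by auto
  thus False using H[OF qd_indisc, of "{a,b}"] 2 by auto
qed

end
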